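(* A set $\mathcal{X}\subseteq\mathbb{Z}_2^\omega$ is a xor-set if and only if there exists a selector $\mathcal{S}$ of the family $\mathcal{P}$ (i.e. a set $\mathcal{S}$ containing exactly one element of each pair in $\mathcal{P}$) such that $\mathcal{X}=\bigcup\mathcal{S}$.
   Context: $\mathbb{Z}_2^\omega$ is the set of infinite binary sequences indexed by $\omega=\{0,1,2,\dots\}$. The Hamming distance is $\mathrm{hd}(x,y)=|\{k: x(k)\ne y(k)\}|\in\omega\cup\{\omega\}$; $x\sim y$ iff $\mathrm{hd}(x,y)$ is finite, and $x\approx y$ iff $\mathrm{hd}(x,y)$ is finite and even. Each equivalence class $C$ of $\sim$ is the union of exactly two equivalence classes $U_0(C),U_1(C)$ of $\approx$; let $\mathcal{P}=\{\{U_0(C),U_1(C)\}: C\in\mathbb{Z}_2^\omega/_\sim\}$. For $x\in\mathbb{Z}_2^\omega$ and $n\in\omega$, $x^{\#n}$ is the sequence obtained from $x$ by flipping the $n$-th coordinate ($x^{\#n}(k)=x(k)$ for $k\ne n$, $x^{\#n}(n)=1-x(n)$). A set $\mathcal{X}\subseteq\mathbb{Z}_2^\omega$ is a xor-set if for every $n\in\omega$ and $x\in\mathbb{Z}_2^\omega$: $x\in\mathcal{X}\iff x^{\#n}\notin\mathcal{X}$. *)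

theory Defs
  imports Main
begin

text \<open>Infinite binary sequences Z_2^omega are modelled as nat => bool.\<close>

definition diffset :: "(nat \<Rightarrow> bool) \<Rightarrow> (nat \<Rightarrow> bool) \<Rightarrow> nat set" where
  "diffset x y = {k. x k \<noteq> y k}"

definition sim_rel :: "((nat \<Rightarrow> bool) \<times> (nat \<Rightarrow> bool)) set" where
  "sim_rel = {(x, y). finite (diffset x y)}"

definition approx_rel :: "((nat \<Rightarrow> bool) \<times> (nat \<Rightarrow> bool)) set" where
  "approx_rel = {(x, y). finite (diffset x y) \<and> even (card (diffset x y))}"

definition pairs_P :: "(nat \<Rightarrow> bool) set set set" where
  "pairs_P = {{U \<in> UNIV // approx_rel. U \<subseteq> C} | C. C \<in> UNIV // sim_rel}"

definition selector :: "'a set set \<Rightarrow> 'a set \<Rightarrow> bool" where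
  "selector F S \<longleftrightarrow> S \<subseteq> \<Union>F \<and> (\<forall>p\<in>F. \<exists>!u. u \<in> S \<and> u \<in> p)"

definition flip :: "(nat \<Rightarrow> bool) \<Rightarrow> nat \<Rightarrow> (nat \<Rightarrow> bool)" where
  "flip x n = x(n := \<not> x n)"

definition xor_set :: "(nat \<Rightarrow> bool) set \<Rightarrow> bool" where
  "xor_set X \<longleftrightarrow> (\<forall>n x. x \<in> X \<longleftrightarrow> flip x n \<notin> X)"

end

theory Submission
  imports Defs
begin

lemma card_symdiff_parity:
  assumes "finite A" "finite B"
  shows "even (card ((A - B) \<union> (B - A))) \<longleftrightarrow> (even (card A) \<longleftrightarrow> even (card B))"
proof -
  have 1: "card A = card (A - B) + card (A \<inter> B)"
    using card_Int_Diff[OF assms(1), of B] by simp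
  have 2: "card B = card (B - A) + card (A \<inter> B)"
    using card_Int_Diff[OF assms(2), of A] by (simp add: Int_commute)
  have 3: "card ((A - B) \<union> (B - A)) = card (A - B) + card (B - A)"
    using assms by (intro card_Un_disjoint) auto
  show ?thesis using 1 2 3 by auto
qed

lemma diffset_trans: "diffset x z = (diffset x y - diffset y z) \<union> (diffset y z - diffset x y)"
  unfolding diffset_def by auto

lemma diffset_sym: "diffset x y = diffset y x"
  unfolding diffset_def by auto

lemma diffset_refl: "diffset x x = {}"
  unfolding diffset_def by auto

lemma diffset_flip: "diffset x (flip y n) = (diffset x y - {n}) \<union> ({n} - diffset x y)"
  unfolding diffset_def flip_def by auto

lemma equiv_approx: "equiv UNIV approx_rel"
  unfolding equiv_def refl_on_def sym_def trans_def approx_rel_def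
proof (intro conjI allI impI)
  fix x y z assume a: "(x, y) \<in> {(x, y). finite (diffset x y) \<and> even (card (diffset x y))}"
    "(y, z) \<in> {(x, y). finite (diffset x y) \<and> even (card (diffset x y))}"
  then show "(x, z) \<in> {(x, y). finite (diffset x y) \<and> even (card (diffset x y))}"
    using card_symdiff_parity[of "diffset x y" "diffset y z"] diffset_trans[of x z y] by auto
qed (auto simp: diffset_sym diffset_refl)

lemma equiv_sim: "equiv UNIV sim_rel"
  unfolding equiv_def refl_on_def sym_def trans_def sim_rel_def
proof (intro conjI allI impI)
  fix x y z assume a: "(x, y) \<in> {(x, y). finite (diffset x y)}"
    "(y, z) \<in> {(x, y). finite (diffset x y)}"
  then show "(x, z) \<in> {(x, y). finite (diffset x y)}"
    using diffset_trans[of x z y] by auto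
qed (auto simp: diffset_sym diffset_refl)

lemma approx_sub_sim: "approx_rel \<subseteq> sim_rel"
  unfolding approx_rel_def sim_rel_def by auto

lemma A_eq: "approx_rel `` {x} = approx_rel `` {y} \<longleftrightarrow> (x, y) \<in> approx_rel"
  using equiv_class_eq_iff[OF equiv_approx] by auto

lemma A_mem: "y \<in> approx_rel `` {x} \<longleftrightarrow> (x, y) \<in> approx_rel"
  by auto

lemma not_approx_flip: "(x, flip x n) \<notin> approx_rel"
  unfolding approx_rel_def using diffset_flip[of x x n] by (auto simp: diffset_refl)

lemma sim_split:
  assumes "(x, z) \<in> sim_rel"
  shows "(z, x) \<in> approx_rel \<or> (z, flip x n) \<in> approx_rel"
proof -
  have f: "finite (diffset z x)" using assms unfolding sim_rel_def by (auto simp: diffset_sym)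
  have "even (card (diffset z (flip x n))) \<longleftrightarrow> (even (card (diffset z x)) \<longleftrightarrow> even (card {n}))"
    unfolding diffset_flip by (rule card_symdiff_parity[OF f]) auto
  moreover have "finite (diffset z (flip x n))" using f unfolding diffset_flip by auto
  ultimately show ?thesis using f unfolding approx_rel_def by auto
qed

definition PP :: "(nat \<Rightarrow> bool) \<Rightarrow> (nat \<Rightarrow> bool) set set" where
  "PP x = {U \<in> UNIV // approx_rel. U \<subseteq> sim_rel `` {x}}"

lemma pairs_P_eq: "pairs_P = range PP"
  unfolding pairs_P_def PP_def quotient_def by auto

lemma PP_eq: "PP x = {approx_rel `` {x}, approx_rel `` {flip x n}}"
proof (intro equalityI subsetI)
  fix U assume "U \<in> PP x"
  then obtain z where U: "U = approx_rel `` {z}" and sub: "U \<subseteq> sim_rel `` {x}"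
    unfolding PP_def quotient_def by auto
  have "z \<in> U" unfolding U using equiv_approx by (simp add: equiv_def refl_on_def)
  then have "(x, z) \<in> sim_rel" using sub by auto
  then have "(z, x) \<in> approx_rel \<or> (z, flip x n) \<in> approx_rel" by (rule sim_split)
  then show "U \<in> {approx_rel `` {x}, approx_rel `` {flip x n}}" unfolding U using A_eq by auto
next
  fix U assume "U \<in> {approx_rel `` {x}, approx_rel `` {flip x n}}"
  then obtain y where U: "U = approx_rel `` {y}" and xy: "(x, y) \<in> sim_rel"
  proof
    assume "U = approx_rel `` {x}" then show ?thesis using that[of x] equiv_sim
      unfolding equiv_def refl_on_def by auto
  next
    assume "U \<in> {approx_rel `` {flip x n}}"
    moreover have "(x, flip x n) \<in> sim_rel" unfolding sim_rel_def using diffset_flip[of x x n]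
      by (auto simp: diffset_refl)
    ultimately show ?thesis using that by auto
  qed
  have "U \<subseteq> sim_rel `` {x}"
  proof
    fix w assume "w \<in> U"
    then have "(y, w) \<in> sim_rel" using U approx_sub_sim by auto
    then show "w \<in> sim_rel `` {x}" using xy equiv_sim unfolding equiv_def trans_def by blast
  qed
  then show "U \<in> PP x" unfolding PP_def U quotient_def by auto
qed

lemma xor_parity:
  assumes "xor_set X" "finite (diffset x y)"
  shows "(x \<in> X \<longleftrightarrow> y \<in> X) \<longleftrightarrow> even (card (diffset x y))"
  using assms(2)
proof (induction "card (diffset x y)" arbitrary: y)
  case 0
  then have "diffset x y = {}" by auto
  then have "x = y" unfolding diffset_def by auto
  then show ?case using 0 by simp
next
  case (Suc m)
  then obtain n where n: "n \<in> diffset x y" by (metis card.empty empty_iff nat.distinct(1) ex_in_conv)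
  define y' where "y' = flip y n"
  have d: "diffset x y' = diffset x y - {n}" unfolding y'_def diffset_flip using n by auto
  have c: "card (diffset x y') = m" using d Suc n by auto
  have f: "finite (diffset x y')" using d Suc by auto
  have "flip y' n = y" unfolding y'_def flip_def by auto
  then have "y \<in> X \<longleftrightarrow> y' \<notin> X" using assms(1) unfolding xor_set_def by metis
  moreover have "even (card (diffset x y)) \<longleftrightarrow> odd (card (diffset x y'))"
    using c Suc(2) by (metis even_Suc)
  ultimately show ?case using Suc(1)[OF c[symmetric] f] by blast
qed

lemma approx_closed:
  assumes "xor_set X" "(x, y) \<in> approx_rel" "x \<in> X"
  shows "y \<in> X"
  using xor_parity[OF assms(1)] assms(2,3) unfolding approx_rel_def by auto

theorem lemma12:
  fixes X :: "(nat \<Rightarrow> bool) set"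
  shows "xor_set X \<longleftrightarrow> (\<exists>S. selector pairs_P S \<and> X = \<Union>S)"
proof
  assume xs: "xor_set X"
  define S where "S = {approx_rel `` {z} | z. z \<in> X}"
  have self: "\<And>z. z \<in> approx_rel `` {z}"
    using equiv_approx by (simp add: equiv_def refl_on_def)
  have "X = \<Union>S"
  proof (intro equalityI subsetI)
    fix x assume "x \<in> X" then show "x \<in> \<Union>S" unfolding S_def using self by blast
  next
    fix x assume "x \<in> \<Union>S" then show "x \<in> X" unfolding S_def using approx_closed[OF xs] by auto
  qed
  moreover have "selector pairs_P S"
    unfolding selector_def pairs_P_eq
  proof (intro conjI ballI)
    show "S \<subseteq> \<Union> (range PP)" unfolding S_def using PP_eq[of _ 0] by blast
  next
    fix p assume "p \<in> range PP"
    then obtain x where p: "p = PP x" by auto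
    have ex: "x \<in> X \<longleftrightarrow> flip x 0 \<notin> X" using xs unfolding xor_set_def by auto
    have inS: "approx_rel `` {z} \<in> S \<longleftrightarrow> z \<in> X" for z
    proof
      assume "approx_rel `` {z} \<in> S"
      then obtain w where "w \<in> X" "approx_rel `` {z} = approx_rel `` {w}" unfolding S_def by auto
      then show "z \<in> X" using A_eq approx_closed[OF xs] equiv_approx
        by (metis equiv_class_eq_iff)
    qed (auto simp: S_def)
    have ne: "approx_rel `` {x} \<noteq> approx_rel `` {flip x 0}" using A_eq not_approx_flip by auto
    show "\<exists>!u. u \<in> S \<and> u \<in> p" unfolding p PP_eq[of x 0]
      using inS[of x] inS[of "flip x 0"] ex ne by auto
  qed
  ultimately show "\<exists>S. selector pairs_P S \<and> X = \<Union>S" by blast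
next
  assume "\<exists>S. selector pairs_P S \<and> X = \<Union>S"
  then obtain S where sel: "selector pairs_P S" and X: "X = \<Union>S" by blast
  have Ssub: "S \<subseteq> \<Union>(range PP)" and uniq: "\<And>p. p \<in> range PP \<Longrightarrow> \<exists>!u. u \<in> S \<and> u \<in> p"
    using sel unfolding selector_def pairs_P_eq by auto
  have self: "\<And>z. z \<in> approx_rel `` {z}"
    using equiv_approx by (simp add: equiv_def refl_on_def)
  have memX: "x \<in> X \<longleftrightarrow> approx_rel `` {x} \<in> S" for x
  proof
    assume "x \<in> X"
    then obtain u where u: "u \<in> S" "x \<in> u" unfolding X by auto
    then obtain y where "u \<in> PP y" using Ssub by auto
    then obtain z where "u = approx_rel `` {z}" using PP_eq[of y 0] by auto
    then have "u = approx_rel `` {x}" using u(2) A_eq by auto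
    then show "approx_rel `` {x} \<in> S" using u by simp
  next
    assume "approx_rel `` {x} \<in> S" then show "x \<in> X" unfolding X using self by auto
  qed
  show "xor_set X" unfolding xor_set_def
  proof (intro allI)
    fix n x
    have ne: "approx_rel `` {x} \<noteq> approx_rel `` {flip x n}" using A_eq not_approx_flip by auto
    have "\<exists>!u. u \<in> S \<and> u \<in> PP x" using uniq by auto
    then show "x \<in> X \<longleftrightarrow> flip x n \<notin> X" unfolding memX PP_eq[of x n] using ne by auto
  qed
qed

end
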